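(* Let $\alpha,\beta>0$, let $g(n)=c_0$ be constant, and let $x$ be a sequence (with given $x(1)$) satisfying $x(n)=\alpha\,x(\lfloor n/2\rfloor)+\beta\,x(\lceil n/2\rceil)+g(n)$ for $n\ge2$. Let $d_0\coloneqq(1-\beta)x(1)-g(1)+g(0)$ and $d_1\coloneqq g(1)-(1-\beta)x(1)$. Then, as $n\to\infty$, with a suitable $1$-periodic continuous function $\Phi$: (1) If $d_0=d_1=0$, then $x(n)=n^{\log_2(\alpha+\beta)}\Phi(\{\log_2n\})$ (exactly, with no error term). (2a) If $d_0\ne0$ or $d_1\ne0$, and $\alpha+\beta>1$, then for every $\varepsilon>0$, $x(n)=n^{\log_2(\alpha+\beta)}\Phi(\{\log_2n\})+O\big(n^{\log_2\max\{\alpha,\beta,1\}+[\max\{\alpha,\beta\}=1]\varepsilon}(\log n)^{[\max\{\alpha,\beta\}<1]}\big)$. (2b) If $d_0\ne0$ or $d_1\ne0$, and $\alpha+\beta\le1$, then $x(n)=O\big((\log n)^{[\alpha+\beta=1\text{ and }d_0+d_1\ne0]}\big)$.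
   Context: $\{z\}=z-\lfloor z\rfloor$ denotes the fractional part. Iverson's bracket: $[S]=1$ if $S$ is true and $0$ otherwise. Here $g(0)=g(1)=c_0$. *)

theory Defs
  imports "HOL-Analysis.Analysis" "HOL-Library.Landau_Symbols"
begin

definition rec_d0 :: "real \<Rightarrow> (nat \<Rightarrow> real) \<Rightarrow> real \<Rightarrow> real" where
  "rec_d0 \<beta> g x1 = (1 - \<beta>) * x1 - g 1 + g 0"

definition rec_d1 :: "real \<Rightarrow> (nat \<Rightarrow> real) \<Rightarrow> real \<Rightarrow> real" where
  "rec_d1 \<beta> g x1 = g 1 - (1 - \<beta>) * x1"

end

theory Submission
  imports Defs
begin


fun ww :: "real \<Rightarrow> real \<Rightarrow> nat \<Rightarrow> real" where
  "ww a b n = (if n = 0 then 0 else if n = 1 then 1 else (if even n then b else a) * ww a b (n div 2))"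

declare ww.simps[simp del]

definition SS :: "real \<Rightarrow> real \<Rightarrow> nat \<Rightarrow> real" where
  "SS a b n = (\<Sum>j<n. ww a b j)"

lemma ww0[simp]: "ww a b 0 = 0" by (simp add: ww.simps)
lemma ww1[simp]: "ww a b 1 = 1" by (simp add: ww.simps)
lemma ww1'[simp]: "ww a b (Suc 0) = 1" by (simp add: ww.simps)
lemma ww_even: "m \<ge> 1 \<Longrightarrow> ww a b (2*m) = b * ww a b m"
  by (subst ww.simps) auto
lemma ww_odd: "m \<ge> 1 \<Longrightarrow> ww a b (2*m+1) = a * ww a b m"
  by (subst ww.simps) auto
lemma ww_pair: "m \<ge> 1 \<Longrightarrow> ww a b (2*m) + ww a b (2*m+1) = (a+b) * ww a b m"
  using ww_even[of m a b] ww_odd[of m a b] by (simp add: algebra_simps)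

lemma ww_nonneg: assumes "a > 0" "b > 0" shows "ww a b n \<ge> 0"
proof (induction n rule: less_induct)
  case (less n)
  show ?case
  proof (cases "n \<le> 1")
    case True then show ?thesis by (cases n) auto
  next
    case False
    then have "n div 2 < n" by auto
    with less have "ww a b (n div 2) \<ge> 0" by auto
    then show ?thesis using False assms by (subst ww.simps) auto
  qed
qed

lemma SS_Suc: "SS a b (Suc n) = SS a b n + ww a b n" by (simp add: SS_def)
lemma SS_0[simp]: "SS a b 0 = 0" by (simp add: SS_def)

lemma SS_double: "SS a b (2*n) = (if n = 0 then 0 else 1 + (a+b) * SS a b n)"
proof (induction n)
  case 0 then show ?case by simp
next
  case (Suc n)
  show ?case
  proof (cases "n = 0")
    case True then show ?thesis by (simp add: SS_def numeral_2_eq_2)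
  next
    case False
    have "SS a b (2 * Suc n) = SS a b (2*n) + ww a b (2*n) + ww a b (2*n+1)"
      by (simp add: SS_Suc)
    also have "\<dots> = 1 + (a+b) * SS a b n + (a+b) * ww a b n"
      using Suc False ww_pair[of n a b] by (simp add: algebra_simps)
    finally show ?thesis by (simp add: SS_Suc algebra_simps)
  qed
qed

lemma SS_mono: assumes "a > 0" "b > 0" "n \<le> m" shows "SS a b n \<le> SS a b m"
  unfolding SS_def using assms by (intro sum_mono2) (auto simp: ww_nonneg)

lemma SS_pow2: "SS a b (2^k) = (\<Sum>i<k. (a+b)^i)"
proof (induction k)
  case 0 then show ?case by (simp add: SS_def)
next
  case (Suc k)
  have "SS a b (2^Suc k) = 1 + (a+b) * SS a b (2^k)"
    using SS_double[of a b "2^k"] by simp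
  also have "\<dots> = 1 + (\<Sum>i<k. (a+b)^Suc i)" using Suc by (simp add: sum_distrib_left)
  also have "\<dots> = (\<Sum>i<Suc k. (a+b)^i)" by (subst sum.lessThan_Suc_shift) simp
  finally show ?case .
qed

lemma block: assumes "c \<ge> 1"
  shows "(\<Sum>j\<in>{2^i*c..<2^i*c+2^i}. ww a b j) = (a+b)^i * ww a b c"
  using assms
proof (induction i arbitrary: c)
  case 0 then show ?case by simp
next
  case (Suc i)
  have e1: "2^Suc i * c = 2^i*(2*c)" "2^Suc i * c + 2^Suc i = 2^i*(2*c+1)+2^i"
    "2^i*(2*c)+2^i = 2^i*(2*c+1)" by (simp_all add: algebra_simps)
  have "(\<Sum>j\<in>{2^Suc i*c..<2^Suc i*c+2^Suc i}. ww a b j)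
     = (\<Sum>j\<in>{2^i*(2*c)..<2^i*(2*c)+2^i}. ww a b j) + (\<Sum>j\<in>{2^i*(2*c+1)..<2^i*(2*c+1)+2^i}. ww a b j)"
    unfolding e1 by (subst sum.atLeastLessThan_concat) (auto simp: algebra_simps)
  also have "\<dots> = (a+b)^i * ww a b (2*c) + (a+b)^i * ww a b (2*c+1)"
    using Suc.IH[of "2*c"] Suc.IH[of "2*c+1"] Suc.prems by simp
  also have "\<dots> = (a+b)^i * (ww a b (2*c) + ww a b (2*c+1))" by (simp add: algebra_simps)
  also have "\<dots> = (a+b)^Suc i * ww a b c" using Suc.prems ww_pair[of c a b] by simp
  finally show ?case .
qed

lemma pow2_powr: assumes "l > 0" shows "(2^i::real) powr log 2 l = l^i"
proof -
  have "(2^i::real) = 2 powr (real i)" by (simp add: powr_realpow)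
  then have "(2^i::real) powr log 2 l = 2 powr (real i * log 2 l)" by (simp add: powr_powr)
  also have "\<dots> = (2 powr log 2 l) ^ i" by (simp add: powr_power)
  also have "\<dots> = l ^ i" using assms by simp
  finally show ?thesis .
qed

context
  fixes a b :: real
  assumes ab: "a > 0" "b > 0" "a + b > 1"
begin

definition TT :: "nat \<Rightarrow> real" where "TT n = SS a b n + 1/(a+b-1)"

lemma TT_double: assumes "n \<ge> 1" shows "TT (2*n) = (a+b) * TT n"
proof -
  have e: "SS a b (2*n) = 1 + (a+b) * SS a b n" using assms SS_double[of a b n] by simp
  have "a + b - 1 \<noteq> 0" using ab by simp
  then show ?thesis unfolding TT_def e by (simp add: field_simps)
qed

lemma TT_pow: "n \<ge> 1 \<Longrightarrow> TT (2^e*n) = (a+b)^e * TT n"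
proof (induction e)
  case 0 then show ?case by simp
next
  case (Suc e)
  have "TT (2^Suc e*n) = TT (2*(2^e*n))" by (simp add: algebra_simps)
  also have "\<dots> = (a+b) * TT (2^e*n)" using Suc.prems by (intro TT_double) simp
  finally show ?case using Suc by simp
qed

lemma TT_mono: "n \<le> m \<Longrightarrow> TT n \<le> TT m"
  using SS_mono[of a b n m] ab unfolding TT_def by simp

lemma TT_pos: "TT n > 0"
proof -
  have "1/(a+b-1) > 0" using ab by simp
  moreover have "SS a b n \<ge> 0" using SS_mono[of a b 0 n] ab by simp
  ultimately show ?thesis unfolding TT_def by linarith
qed

lemma TT_1: "TT 1 = 1/(a+b-1)" unfolding TT_def by (simp add: SS_def)
lemma TT_1': "TT (Suc 0) = 1/(a+b-1)" using TT_1 by simp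

lemma rpow_mult2: "real (2^e*n) powr log 2 (a+b) = (a+b)^e * real n powr log 2 (a+b)"
  using ab by (simp add: powr_mult pow2_powr)

lemma rho_pos: "log 2 (a+b) > 0" using ab by simp

lemma TT_bound: assumes "n \<ge> 1" shows "TT n \<le> (a+b)/(a+b-1) * real n powr log 2 (a+b)"
proof -
  obtain k where k: "2^k \<le> n" "n < 2^(k+1)" using ex_power_ivl1[of 2 n] assms by auto
  have "TT n \<le> TT (2^(k+1))" using k by (intro TT_mono) simp
  also have "\<dots> = (a+b)^(k+1) * TT 1" using TT_pow[of 1 "k+1"] by simp
  also have "\<dots> = (a+b)/(a+b-1) * (a+b)^k" by (simp add: TT_1')
  finally have 1: "TT n \<le> (a+b)/(a+b-1) * (a+b)^k" .
  have "(a+b)^k = real (2^k) powr log 2 (a+b)" using ab by (simp add: pow2_powr)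
  also have "\<dots> \<le> real n powr log 2 (a+b)" using k rho_pos
    by (intro powr_mono2) auto
  finally have 2: "(a+b)^k \<le> real n powr log 2 (a+b)" .
  have "(a+b)/(a+b-1) \<ge> 0" using ab by simp
  with 1 2 show ?thesis by (meson mult_left_mono order_trans)
qed

lemma ww_le: "n \<ge> 1 \<Longrightarrow> ww a b n \<le> real n powr log 2 (a+b)"
proof (induction n rule: less_induct)
  case (less n)
  show ?case
  proof (cases "n = 1")
    case True then show ?thesis by simp
  next
    case False
    then have n2: "n \<ge> 2" using less.prems by auto
    then have "ww a b (n div 2) \<le> real (n div 2) powr log 2 (a+b)" using less by auto
    also have "\<dots> \<le> (real n / 2) powr log 2 (a+b)"
      using rho_pos n2 by (intro powr_mono2) (auto simp: real_of_nat_div)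
    also have "\<dots> = real n powr log 2 (a+b) / (a+b)" using ab by (simp add: powr_divide)
    finally have h: "ww a b (n div 2) \<le> real n powr log 2 (a+b) / (a+b)" .
    have c: "(if even n then b else a) \<le> a+b" "(if even n then b else a) \<ge> 0" using ab by auto
    have "ww a b n = (if even n then b else a) * ww a b (n div 2)" using n2 by (subst ww.simps) auto
    also have "\<dots> \<le> (a+b) * (real n powr log 2 (a+b) / (a+b))"
      using c h ww_nonneg[OF ab(1,2)] by (intro mult_mono) auto
    finally show ?thesis using ab by simp
  qed
qed

lemma ww_le_K: "n \<ge> 2^K \<Longrightarrow> ww a b n \<le> (max a b / (a+b))^K * real n powr log 2 (a+b)"
proof (induction K arbitrary: n)
  case 0 then show ?case using ww_le by simp
next
  case (Suc K)
  have n2: "n \<ge> 2" 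
  proof -
    have "(2::nat) \<le> 2^Suc K" using one_le_power[of "2::nat" K] by simp
    then show ?thesis using Suc.prems by linarith
  qed
  have "n div 2 \<ge> 2^K" using Suc.prems by (simp add: div_le_mono le_div_geq)
  then have "ww a b (n div 2) \<le> (max a b / (a+b))^K * real (n div 2) powr log 2 (a+b)" using Suc.IH by auto
  also have "\<dots> \<le> (max a b / (a+b))^K * (real n / 2) powr log 2 (a+b)"
    using rho_pos n2 ab by (intro mult_left_mono powr_mono2) (auto simp: real_of_nat_div)
  also have "\<dots> = (max a b / (a+b))^K * real n powr log 2 (a+b) / (a+b)" using ab by (simp add: powr_divide)
  finally have h: "ww a b (n div 2) \<le> (max a b / (a+b))^K * real n powr log 2 (a+b) / (a+b)" .
  have c: "(if even n then b else a) \<le> max a b" "(if even n then b else a) \<ge> 0" using ab by auto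
  have "ww a b n = (if even n then b else a) * ww a b (n div 2)" using n2 by (subst ww.simps) auto
  also have "\<dots> \<le> max a b * ((max a b / (a+b))^K * real n powr log 2 (a+b) / (a+b))"
    using c h ww_nonneg[OF ab(1,2)] by (intro mult_mono) auto
  finally show ?case by (simp add: field_simps)
qed

lemma ex_pow_between: assumes "L \<ge> (1::nat)" shows "\<exists>i. L \<le> 2^i \<and> 2^i \<le> 2*L"
proof -
  obtain j where j: "2^j \<le> L" "L < 2^(j+1)" using ex_power_ivl1[of 2 L] assms by auto
  then show ?thesis by (intro exI[of _ "j+1"]) auto
qed

lemma osc: assumes "n \<ge> 1" "n \<le> m" "2^(K+1)*(m-n) \<le> n"
  shows "TT m - TT n \<le> (1+(a+b)) * (max a b/(a+b))^K * real n powr log 2 (a+b)"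
proof (cases "m = n")
  case True
  have "(max a b/(a+b))^K \<ge> 0" using ab by simp
  then show ?thesis using True ab by simp
next
  case False
  define L where "L = m - n"
  have L1: "L \<ge> 1" using False assms unfolding L_def by simp
  obtain i where i: "L \<le> 2^i" "2^i \<le> 2*L" using ex_pow_between[OF L1] by auto
  define c where "c = n div 2^i"
  have "2^i * 2^K \<le> 2*L*2^K" using i by simp
  also have "\<dots> = 2^(K+1)*L" by simp
  also have "\<dots> \<le> n" using assms(3) unfolding L_def .
  finally have "2^K \<le> c" unfolding c_def by (metis div_le_mono mult.commute nonzero_mult_div_cancel_left power_not_zero zero_neq_numeral)
  then have c1: "c \<ge> 1" using one_le_power[of "2::nat" K] by linarith
  have cn: "2^i*c \<le> n" unfolding c_def by (metis div_mult_mod_eq le_add1 mult.commute)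
  have nc: "n < 2^i*c + 2^i" unfolding c_def
    by (metis add.commute div_mult_mod_eq mod_less_divisor mult.commute nat_add_left_cancel_less pos2 zero_less_power)
  have "TT m - TT n = (\<Sum>j\<in>{n..<m}. ww a b j)"
  proof -
    have "(\<Sum>j\<in>{0..<n}. ww a b j) + (\<Sum>j\<in>{n..<m}. ww a b j) = (\<Sum>j\<in>{0..<m}. ww a b j)"
      using assms(2) by (intro sum.atLeastLessThan_concat) auto
    then show ?thesis unfolding TT_def SS_def by (simp add: atLeast0LessThan)
  qed
  also have "\<dots> \<le> (\<Sum>j\<in>{2^i*c..<2^i*(c+1)+2^i}. ww a b j)"
    using cn nc i ww_nonneg[OF ab(1,2)] unfolding L_def
    by (intro sum_mono2) (auto simp: algebra_simps)
  also have "\<dots> = (\<Sum>j\<in>{2^i*c..<2^i*c+2^i}. ww a b j) + (\<Sum>j\<in>{2^i*(c+1)..<2^i*(c+1)+2^i}. ww a b j)"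
  proof -
    have e: "(2::nat)^i*c+2^i = 2^i*(c+1)" by simp
    show ?thesis unfolding e by (rule sum.atLeastLessThan_concat[symmetric]) auto
  qed
  also have "\<dots> = (a+b)^i * ww a b c + (a+b)^i * ww a b (c+1)"
    using block[where c=c and i=i and a=a and b=b] block[where c="c+1" and i=i and a=a and b=b] c1 by simp
  finally have 1: "TT m - TT n \<le> (a+b)^i * ww a b c + (a+b)^i * ww a b (c+1)" .
  define r where "r = (max a b/(a+b))^K"
  have r0: "r \<ge> 0" unfolding r_def using ab by simp
  have lc: "(a+b)^i * real c powr log 2 (a+b) \<le> real n powr log 2 (a+b)"
  proof -
    have "(a+b)^i * real c powr log 2 (a+b) = real (2^i*c) powr log 2 (a+b)" using rpow_mult2 by simp
    also have "\<dots> \<le> real n powr log 2 (a+b)"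
    proof -
      have "real (2^i*c) \<le> real n" using cn by (simp only: of_nat_le_iff)
      then show ?thesis using rho_pos by (intro powr_mono2) auto
    qed
    finally show ?thesis .
  qed
  have w1: "ww a b c \<le> r * real c powr log 2 (a+b)" unfolding r_def using ww_le_K \<open>2^K \<le> c\<close> by simp
  have w2: "ww a b (c+1) \<le> r * ((a+b) * real c powr log 2 (a+b))"
  proof -
    have "ww a b (c+1) \<le> r * real (c+1) powr log 2 (a+b)" unfolding r_def using ww_le_K[of K "c+1"] \<open>2^K \<le> c\<close> by linarith
    also have "\<dots> \<le> r * real (2^1*c) powr log 2 (a+b)" using r0 c1 rho_pos
      by (intro mult_left_mono powr_mono2) auto
    also have "\<dots> = r * ((a+b) * real c powr log 2 (a+b))" using rpow_mult2[of 1 c] by simp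
    finally show ?thesis .
  qed
  have p: "(a+b)^i \<ge> 0" using ab by simp
  have "(a+b)^i * ww a b c \<le> r * ((a+b)^i * real c powr log 2 (a+b))"
    using mult_left_mono[OF w1 p] by (simp add: algebra_simps)
  also have "\<dots> \<le> r * real n powr log 2 (a+b)" using lc r0 by (intro mult_left_mono)
  finally have 2: "(a+b)^i * ww a b c \<le> r * real n powr log 2 (a+b)" .
  have "(a+b)^i * ww a b (c+1) \<le> r * (a+b) * ((a+b)^i * real c powr log 2 (a+b))"
    using mult_left_mono[OF w2 p] by (simp add: algebra_simps)
  also have "\<dots> \<le> r * (a+b) * real n powr log 2 (a+b)" using lc r0 ab by (intro mult_left_mono) auto
  finally have 3: "(a+b)^i * ww a b (c+1) \<le> r * (a+b) * real n powr log 2 (a+b)" .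
  from 1 2 3 show ?thesis unfolding r_def by (simp add: algebra_simps)
qed

definition UU :: "nat \<Rightarrow> real" where "UU n = TT n / real n powr log 2 (a+b)"

lemma UU_pow: assumes "n \<ge> 1" shows "UU (2^e*n) = UU n"
proof -
  have "(a+b)^e > 0" using ab by simp
  then show ?thesis unfolding UU_def rpow_mult2 TT_pow[OF assms] using ab by (simp add: field_simps)
qed

lemma UU_osc: assumes "n \<ge> 1" "n \<le> m" "2^(K+1)*(m-n) \<le> n" "y \<ge> 0"
  "real m powr log 2 (a+b) \<le> (1+y) * real n powr log 2 (a+b)"
  shows "\<bar>UU m - UU n\<bar> \<le> max ((1+(a+b)) * (max a b/(a+b))^K) ((a+b)/(a+b-1) * y)"
proof -
  define N where "N = real n powr log 2 (a+b)"
  define M where "M = real m powr log 2 (a+b)"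
  have N0: "N > 0" unfolding N_def using assms by simp
  have NM: "N \<le> M" unfolding N_def M_def using assms rho_pos by (intro powr_mono2) auto
  have M0: "M > 0" using N0 NM by simp
  have Tm: "TT m > 0" "TT n > 0" using TT_pos by auto
  have TnTm: "TT n \<le> TT m" using TT_mono assms by simp
  have o: "TT m - TT n \<le> (1+(a+b)) * (max a b/(a+b))^K * N" using osc[OF assms(1-3)] unfolding N_def .
  have up: "UU m - UU n \<le> (1+(a+b)) * (max a b/(a+b))^K"
  proof -
    have "UU m - UU n = TT m / M - TT n / N" unfolding UU_def M_def N_def by simp
    also have "\<dots> \<le> TT m / N - TT n / N" using Tm N0 NM by (simp add: frac_le)
    also have "\<dots> = (TT m - TT n) / N" by (simp add: diff_divide_distrib)
    also have "\<dots> \<le> (1+(a+b)) * (max a b/(a+b))^K" using o N0 by (simp add: divide_le_eq)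
    finally show ?thesis .
  qed
  have TB: "TT n \<le> (a+b)/(a+b-1) * N" using TT_bound assms unfolding N_def by simp
  have dn: "UU n - UU m \<le> (a+b)/(a+b-1) * y"
  proof -
    have "UU n - UU m = TT n / N - TT m / M" unfolding UU_def M_def N_def by simp
    also have "\<dots> \<le> TT n / N - TT n / M" using TnTm M0 by (simp add: divide_right_mono)
    also have "\<dots> = TT n * (M - N) / (N * M)" using N0 M0 by (simp add: field_simps)
    also have "\<dots> \<le> TT n * (y * N) / (N * M)" using assms(5) Tm N0 M0 unfolding M_def[symmetric] N_def[symmetric]
      by (intro divide_right_mono mult_left_mono) (auto simp: algebra_simps)
    also have "\<dots> = TT n * y / M" using N0 by simp
    also have "\<dots> \<le> TT n * y / N" using Tm N0 NM assms(4) by (intro divide_left_mono) auto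
    also have "\<dots> \<le> ((a+b)/(a+b-1) * N) * y / N" using TB assms(4) N0 by (intro divide_right_mono mult_right_mono) auto
    also have "\<dots> = (a+b)/(a+b-1) * y" using N0 by simp
    finally show ?thesis .
  qed
  from up dn show ?thesis by linarith
qed

definition XX :: "real set" where "XX = {log 2 (real n) - real k | n k. n \<ge> 1}"

definition ff :: "real \<Rightarrow> real" where
  "ff t = UU (fst (SOME p. fst p \<ge> 1 \<and> t = log 2 (real (fst p)) - real (snd p)))"

lemma log2_mult_pow: "n \<ge> 1 \<Longrightarrow> log 2 (real (2^k*n)) = real k + log 2 (real n)"
  by (simp add: log_mult log_nat_power)

lemma consist1: assumes "n \<ge> 1" "n' \<ge> 1" "log 2 (real n) - real k = log 2 (real n') - real k'" "k \<le> k'"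
  shows "UU n' = UU n"
proof -
  have "log 2 (real n') = log 2 (real (2^(k'-k)*n))" using assms log2_mult_pow[of n "k'-k"] by simp
  then have "2 powr log 2 (real n') = 2 powr log 2 (real (2^(k'-k)*n))" by simp
  then have "real n' = real (2^(k'-k)*n)" using assms by simp
  then have "n' = 2^(k'-k)*n" by (simp only: of_nat_eq_iff)
  then show ?thesis using UU_pow assms by simp
qed

lemma consist: assumes "n \<ge> 1" "n' \<ge> 1" "log 2 (real n) - real k = log 2 (real n') - real k'"
  shows "UU n' = UU n"
  using consist1[OF assms] consist1[OF assms(2,1) assms(3)[symmetric]] by (cases "k \<le> k'") auto

lemma ff_eq: assumes "n \<ge> 1" shows "ff (log 2 (real n) - real k) = UU n"
proof -
  define P where "P = (\<lambda>p::nat\<times>nat. fst p \<ge> 1 \<and> log 2 (real n) - real k = log 2 (real (fst p)) - real (snd p))"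
  have "P (n,k)" unfolding P_def using assms by simp
  define p where "p = (SOME p. P p)"
  have "P p" unfolding p_def by (rule someI[of P, OF \<open>P (n,k)\<close>])
  then have hp: "fst p \<ge> 1" "log 2 (real n) - real k = log 2 (real (fst p)) - real (snd p)"
    unfolding P_def by auto
  have "UU (fst p) = UU n" by (rule consist[OF assms hp(1) hp(2)])
  then show ?thesis unfolding ff_def p_def P_def by simp
qed

lemma unif_step: assumes "e > 0"
  shows "\<exists>d>0. \<forall>N M. N \<ge> 1 \<longrightarrow> N \<le> M \<longrightarrow> log 2 (real M) - log 2 (real N) < d \<longrightarrow> \<bar>UU M - UU N\<bar> < e"
proof -
  define B where "B = (a+b)/(a+b-1)"
  have B0: "B > 0" unfolding B_def using ab by simp
  have r1: "max a b / (a+b) < 1" "max a b / (a+b) > 0" using ab by auto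
  obtain K where K: "(max a b / (a+b))^K < e / (1+(a+b))"
    using real_arch_pow_inv[OF _ r1(1), of "e/(1+(a+b))"] assms ab by auto
  define yv where "yv = e / (2*B)"
  have yv0: "yv > 0" unfolding yv_def using assms B0 by simp
  define d1 where "d1 = log 2 (1 + 1/2^(K+1))"
  define d2 where "d2 = log (a+b) (1 + yv)"
  have d10: "d1 > 0"
  proof -
    have "log 2 1 < log 2 (1 + 1/(2::real)^(K+1))" by (subst log_less_cancel_iff) (auto intro: add_pos_pos)
    then show ?thesis unfolding d1_def by simp
  qed
  have d20: "d2 > 0" unfolding d2_def using ab yv0 by simp
  define d where "d = min d1 d2"
  have d0: "d > 0" unfolding d_def using d10 d20 by simp
  have main: "\<bar>UU M - UU N\<bar> < e" if NM: "N \<ge> 1" "N \<le> M" "log 2 (real M) - log 2 (real N) < d" for N M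
  proof -
    have M1: "M \<ge> 1" using NM by simp
    have "real M = 2 powr log 2 (real M)" using M1 by simp
    also have "\<dots> < 2 powr (log 2 (real N) + d)" using NM by (intro powr_less_mono) auto
    also have "\<dots> = real N * 2 powr d" using NM by (simp add: powr_add)
    finally have Mlt: "real M < real N * 2 powr d" .
    have "2 powr d \<le> 2 powr d1" unfolding d_def by simp
    also have "\<dots> = 1 + 1/2^(K+1)" unfolding d1_def by (simp add: add_pos_pos)
    finally have pd: "2 powr d \<le> 1 + 1/2^(K+1)" .
    have "real N * 2 powr d \<le> real N * (1 + 1/2^(K+1))" by (rule mult_left_mono[OF pd]) simp
    then have "real M < real N * (1 + 1/2^(K+1))" using Mlt by linarith
    then have "2^(K+1) * (real M - real N) < real N"
      by (simp add: field_simps)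
    then have "real (2^(K+1) * (M - N)) < real N" using NM by (simp add: of_nat_diff)
    then have c3: "2^(K+1) * (M - N) \<le> N" by (simp only: of_nat_less_iff)
    have "real M powr log 2 (a+b) \<le> (real N * 2 powr d) powr log 2 (a+b)"
      using Mlt rho_pos by (intro powr_mono2) auto
    also have "\<dots> = real N powr log 2 (a+b) * (2 powr d) powr log 2 (a+b)" by (simp add: powr_mult)
    also have "(2 powr d) powr log 2 (a+b) = (a+b) powr d"
    proof -
      have "(2 powr d) powr log 2 (a+b) = (2 powr log 2 (a+b)) powr d" by (simp add: powr_powr mult.commute)
      then show ?thesis using ab by simp
    qed
    also have "(a+b) powr d \<le> (a+b) powr d2" using ab unfolding d_def by (intro powr_mono) auto
    also have "\<dots> = 1 + yv" unfolding d2_def using ab yv0 by simp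
    finally have c5: "real M powr log 2 (a+b) \<le> (1+yv) * real N powr log 2 (a+b)"
      by (metis mult_left_mono powr_ge_zero mult.commute)
    have "\<bar>UU M - UU N\<bar> \<le> max ((1+(a+b)) * (max a b/(a+b))^K) (B * yv)"
      unfolding B_def using UU_osc[OF NM(1,2) c3 _ c5] yv0 by simp
    moreover have "(1+(a+b)) * (max a b/(a+b))^K < e" using K ab by (simp add: field_simps)
    moreover have "B * yv < e" unfolding yv_def using B0 assms by simp
    ultimately show ?thesis by linarith
  qed
  show ?thesis using d0 main by blast
qed

lemma ff_uc: "uniformly_continuous_on XX ff"
  unfolding uniformly_continuous_on_def
proof (intro allI impI)
  fix e :: real assume e: "e > 0"
  obtain d where d: "d > 0" "\<And>N M. N \<ge> 1 \<Longrightarrow> N \<le> M \<Longrightarrow> log 2 (real M) - log 2 (real N) < d \<Longrightarrow> \<bar>UU M - UU N\<bar> < e"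
    using unif_step[OF e] by blast
  have "\<forall>x\<in>XX. \<forall>x'\<in>XX. dist x' x < d \<longrightarrow> dist (ff x') (ff x) < e"
  proof (intro ballI impI)
    fix x x' assume x: "x \<in> XX" and x': "x' \<in> XX" and dx: "dist x' x < d"
    obtain n k where nk: "n \<ge> 1" "x = log 2 (real n) - real k" using x unfolding XX_def by auto
    obtain n' k' where nk': "n' \<ge> 1" "x' = log 2 (real n') - real k'" using x' unfolding XX_def by auto
    define N where "N = 2^k' * n"
    define N' where "N' = 2^k * n'"
    have N1: "N \<ge> 1" "N' \<ge> 1" unfolding N_def N'_def using nk nk' by auto
    have xe: "x = log 2 (real N) - real (k+k')" unfolding N_def using nk log2_mult_pow[of n k'] by simp
    have xe': "x' = log 2 (real N') - real (k+k')" unfolding N'_def using nk' log2_mult_pow[of n' k] by simp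
    have fx: "ff x = UU N" "ff x' = UU N'" unfolding xe xe' by (rule ff_eq[OF N1(1)], rule ff_eq[OF N1(2)])
    have dd: "\<bar>log 2 (real N') - log 2 (real N)\<bar> < d" using dx xe xe' by (simp add: dist_real_def)
    have "\<bar>UU N' - UU N\<bar> < e"
    proof (cases "N \<le> N'")
      case True then show ?thesis using d(2)[OF N1(1) True] dd by simp
    next
      case False
      then have "N' \<le> N" by simp
      have "\<bar>log 2 (real N) - log 2 (real N')\<bar> < d" using dd by simp
      then have "\<bar>UU N - UU N'\<bar> < e" using d(2)[OF N1(2) \<open>N' \<le> N\<close>] by simp
      then show ?thesis by (simp add: abs_minus_commute)
    qed
    then show "dist (ff x') (ff x) < e" using fx by (simp add: dist_real_def)
  qed
  then show "\<exists>d>0. \<forall>x\<in>XX. \<forall>x'\<in>XX. dist x' x < d \<longrightarrow> dist (ff x') (ff x) < e" using d(1) by blast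
qed

lemma XX_dense: "closure XX = UNIV"
proof -
  have "t \<in> closure XX" for t
    unfolding closure_approachable
  proof (intro allI impI)
    fix e :: real assume e: "e > 0"
    define q where "q = 2 powr (-e)"
    have "2 powr (-e) < 2 powr 0" using e by (intro powr_less_mono) auto
    then have q: "q < 1" "q > 0" unfolding q_def by auto
    define M0 where "M0 = 1/(1-q) + 1"
    have M0e: "M0 * (1-q) = 1 + (1-q)" unfolding M0_def using q by (simp add: field_simps)
    have M0: "M0 > 1" "M0 * (1-q) > 1" using M0e q unfolding M0_def by auto
    define k where "k = nat \<lceil>log 2 M0 - t\<rceil>"
    have tk: "t + real k \<ge> log 2 M0" unfolding k_def by linarith
    define Y where "Y = 2 powr (t + real k)"
    have "M0 = 2 powr log 2 M0" using M0 by simp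
    also have "\<dots> \<le> Y" unfolding Y_def using tk by simp
    finally have YM: "Y \<ge> M0" .
    define N where "N = nat \<lfloor>Y\<rfloor>"
    have NY: "real N \<le> Y" "real N > Y - 1" unfolding N_def using YM M0 by linarith+
    have N1: "N \<ge> 1" unfolding N_def using YM M0 by linarith
    have "Y * (1 - q) \<ge> M0 * (1-q)" using YM q by (intro mult_right_mono) auto
    then have "Y - 1 > Y * q" using M0 by (simp add: algebra_simps)
    then have "real N > Y * q" using NY by linarith
    then have "2 powr e * real N > 2 powr e * (Y * q)" by simp
    moreover have "2 powr e * (Y * q) = Y" unfolding q_def by (simp add: powr_minus field_simps)
    ultimately have YN: "Y < 2 powr e * real N" by simp
    have Ypos: "Y > 0" unfolding Y_def by simp
    have "log 2 Y < log 2 (2 powr e * real N)" using YN Ypos by (subst log_less_cancel_iff) auto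
    also have "\<dots> = e + log 2 (real N)" using N1 by (simp add: log_mult)
    finally have l1: "log 2 Y < e + log 2 (real N)" .
    have l2: "log 2 (real N) \<le> log 2 Y" using NY N1 Ypos by (subst log_le_cancel_iff) auto
    have lY: "log 2 Y = t + real k" unfolding Y_def by simp
    have "log 2 (real N) - real k \<in> XX" unfolding XX_def using N1 by auto
    moreover have "dist (log 2 (real N) - real k) t < e" using l1 l2 lY by (simp add: dist_real_def)
    ultimately show "\<exists>y\<in>XX. dist y t < e" by blast
  qed
  then show ?thesis by auto
qed

lemma XX_shift: "x \<in> XX \<Longrightarrow> x + 1 \<in> XX \<and> ff (x+1) = ff x"
proof -
  assume "x \<in> XX"
  then obtain n k where nk: "n \<ge> 1" "x = log 2 (real n) - real k" unfolding XX_def by auto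
  have e: "x + 1 = log 2 (real (2^1*n)) - real k" using nk log2_mult_pow[of n 1] by simp
  have "2^1*n \<ge> 1" using nk by simp
  then have "x + 1 \<in> XX" unfolding XX_def e by blast
  moreover have "ff (x+1) = ff x"
  proof -
    have "ff (x+1) = UU (2^1*n)" unfolding e by (rule ff_eq) fact
    moreover have "ff x = UU n" unfolding nk(2) by (rule ff_eq[OF nk(1)])
    ultimately show ?thesis using UU_pow[OF nk(1), of 1] by simp
  qed
  ultimately show ?thesis by simp
qed

lemma Psi_exists: "\<exists>g. continuous_on UNIV g \<and> (\<forall>t. g (t+1) = g t) \<and>
   (\<forall>n\<ge>1. TT n = real n powr log 2 (a+b) * g (frac (log 2 (real n))))"
proof -
  obtain g where g: "uniformly_continuous_on (closure XX) g" "\<And>x. x \<in> XX \<Longrightarrow> ff x = g x"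
    "\<And>Y h x. XX \<subseteq> Y \<Longrightarrow> Y \<subseteq> closure XX \<Longrightarrow> continuous_on Y h \<Longrightarrow> (\<And>x. x \<in> XX \<Longrightarrow> ff x = h x) \<Longrightarrow> x \<in> Y \<Longrightarrow> h x = g x"
    by (rule uniformly_continuous_on_extension_on_closure[OF ff_uc]) blast
  have gc: "continuous_on UNIV g" using uniformly_continuous_imp_continuous[OF g(1)] XX_dense by simp
  have hc: "continuous_on UNIV (\<lambda>t. g (t+1))"
    using gc by (intro continuous_on_compose2[OF gc]) (auto intro!: continuous_intros)
  have per: "g (t+1) = g t" for t
  proof -
    have "ff x = g (x+1)" if "x \<in> XX" for x
    proof -
      have "x + 1 \<in> XX" "ff (x+1) = ff x" using XX_shift[OF that] by auto
      then show ?thesis using g(2)[of "x+1"] by simp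
    qed
    then show ?thesis using g(3)[of UNIV "\<lambda>t. g (t+1)" t] hc XX_dense by auto
  qed
  have rep: "TT n = real n powr log 2 (a+b) * g (frac (log 2 (real n)))" if n: "n \<ge> 1" for n
  proof -
    have l0: "log 2 (real n) \<ge> 0" using n by simp
    have fe: "frac (log 2 (real n)) = log 2 (real n) - real (nat \<lfloor>log 2 (real n)\<rfloor>)"
      using l0 by (simp add: frac_def)
    have "frac (log 2 (real n)) \<in> XX" unfolding fe XX_def using n by blast
    then have "g (frac (log 2 (real n))) = ff (frac (log 2 (real n)))" using g(2) by simp
    also have "\<dots> = UU n" unfolding fe by (rule ff_eq[OF n])
    finally show ?thesis unfolding UU_def using n by simp
  qed
  show ?thesis using gc per rep by blast
qed

end



lemma fl1: "nat \<lfloor>real (2*m) / 2\<rfloor> = m" "nat \<lceil>real (2*m) / 2\<rceil> = m" by simp_all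
lemma fl2: "nat \<lfloor>real (2*m+1) / 2\<rfloor> = m" "nat \<lceil>real (2*m+1) / 2\<rceil> = m+1"
proof -
  have "\<lfloor>real (2*m+1) / 2\<rfloor> = int m" by (subst floor_eq_iff) auto
  then show "nat \<lfloor>real (2*m+1) / 2\<rfloor> = m" by simp
  have "\<lceil>real (2*m+1) / 2\<rceil> = int m + 1" by (subst ceiling_eq_iff) auto
  then show "nat \<lceil>real (2*m+1) / 2\<rceil> = m+1" by simp
qed

lemma rec_diff:
  fixes \<alpha> \<beta> c0 :: real and g x :: "nat \<Rightarrow> real"
  assumes g_const: "\<forall>n. g n = c0"
    and rec: "\<forall>n\<ge>2. x n = \<alpha> * x (nat \<lfloor>real n / 2\<rfloor>) + \<beta> * x (nat \<lceil>real n / 2\<rceil>) + g n"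
  shows "n \<ge> 1 \<Longrightarrow> x (n+1) - x n = (x 2 - x 1) * ww \<alpha> \<beta> n"
proof (induction n rule: less_induct)
  case (less n)
  show ?case
  proof (cases "n = 1")
    case True then show ?thesis by (simp add: numeral_2_eq_2)
  next
    case False
    then have n2: "n \<ge> 2" using less.prems by simp
    obtain m where m: "n = 2*m \<or> n = 2*m+1" by (metis dvd_mult_div_cancel odd_two_times_div_two_succ)
    have m1: "m \<ge> 1" using m n2 by auto
    have mn: "m < n" using m m1 by auto
    have IH: "x (m+1) - x m = (x 2 - x 1) * ww \<alpha> \<beta> m" using less.IH[OF mn m1] .
    show ?thesis
    proof (cases "n = 2*m")
      case True
      have e1: "x (2*m) = \<alpha> * x m + \<beta> * x m + c0" using rec[rule_format, of "2*m"] n2 True g_const fl1[of m] by simp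
      have e2: "x (2*m+1) = \<alpha> * x m + \<beta> * x (m+1) + c0" using rec[rule_format, of "2*m+1"] n2 True g_const fl2[of m] by simp
      have "x (n+1) - x n = \<beta> * (x (m+1) - x m)" using e1 e2 True by (simp add: algebra_simps)
      also have "\<dots> = (x 2 - x 1) * ww \<alpha> \<beta> n" using IH True ww_even[OF m1] by simp
      finally show ?thesis .
    next
      case False
      then have nm: "n = 2*m+1" using m by simp
      have e1: "x (2*m+2) = \<alpha> * x (m+1) + \<beta> * x (m+1) + c0"
        using rec[rule_format, of "2*(m+1)"] n2 g_const fl1[of "m+1"] by (simp add: algebra_simps)
      have e2: "x (2*m+1) = \<alpha> * x m + \<beta> * x (m+1) + c0" using rec[rule_format, of "2*m+1"] n2 nm g_const fl2[of m] by simp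
      have "x (n+1) - x n = \<alpha> * (x (m+1) - x m)" using e1 e2 nm by (simp add: algebra_simps)
      also have "\<dots> = (x 2 - x 1) * ww \<alpha> \<beta> n" using IH nm ww_odd[OF m1] by simp
      finally show ?thesis .
    qed
  qed
qed

lemma rec_sol:
  fixes \<alpha> \<beta> c0 :: real and g x :: "nat \<Rightarrow> real"
  assumes g_const: "\<forall>n. g n = c0"
    and rec: "\<forall>n\<ge>2. x n = \<alpha> * x (nat \<lfloor>real n / 2\<rfloor>) + \<beta> * x (nat \<lceil>real n / 2\<rceil>) + g n"
  shows "n \<ge> 1 \<Longrightarrow> x n = x 1 + (x 2 - x 1) * SS \<alpha> \<beta> n"
proof (induction n rule: dec_induct)
  case base then show ?case by (simp add: SS_def)
next
  case (step n)
  then show ?case using rec_diff[OF assms, of n] by (simp add: SS_Suc algebra_simps)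
qed

lemma x2_eq:
  fixes \<alpha> \<beta> c0 :: real and g x :: "nat \<Rightarrow> real"
  assumes g_const: "\<forall>n. g n = c0"
    and rec: "\<forall>n\<ge>2. x n = \<alpha> * x (nat \<lfloor>real n / 2\<rfloor>) + \<beta> * x (nat \<lceil>real n / 2\<rceil>) + g n"
  shows "x 2 = (\<alpha>+\<beta>) * x 1 + c0"
  using rec[rule_format, of 2] g_const by (simp add: algebra_simps)



lemma ln_ge1: "n \<ge> 3 \<Longrightarrow> ln (real n) \<ge> 1"
proof -
  assume n: "n \<ge> 3"
  have "exp 1 \<le> (3::real)" using exp_le by simp
  also have "\<dots> \<le> real n" using n by simp
  finally have "exp 1 \<le> real n" .
  then show ?thesis using n by (subst ln_ge_iff) auto
qed

lemma target_ge1: assumes "E \<ge> 0" shows "\<forall>\<^sub>F n in at_top. 1 \<le> norm (real n powr E * ln (real n) ^ p)"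
proof -
  have "1 \<le> norm (real n powr E * ln (real n) ^ p)" if n: "n \<ge> 3" for n :: nat
  proof -
    have a: "1 \<le> real n powr E" using n assms by (intro ge_one_powr_ge_zero) auto
    have b: "1 \<le> ln (real n) ^ p" using ln_ge1[OF n] by (rule one_le_power)
    have "1 \<le> real n powr E * ln (real n) ^ p" using a b by (metis mult_mono' mult_1 zero_le_one)
    then show ?thesis by simp
  qed
  then show ?thesis unfolding eventually_at_top_linorder by blast
qed

lemma bounded_bigo: assumes "E \<ge> 0" "\<forall>\<^sub>F n in at_top. \<bar>f n\<bar> \<le> C"
  shows "f \<in> O(\<lambda>n. real n powr E * ln (real n) ^ p)"
proof (rule bigoI[where c = "\<bar>C\<bar>"])
  show "\<forall>\<^sub>F n in at_top. norm (f n) \<le> \<bar>C\<bar> * norm (real n powr E * ln (real n) ^ p)"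
    using target_ge1[OF assms(1), of p] assms(2)
  proof eventually_elim
    case (elim n)
    have "\<bar>C\<bar> * 1 \<le> \<bar>C\<bar> * norm (real n powr E * ln (real n) ^ p)" using elim(1) by (intro mult_left_mono) auto
    then show ?case using elim(2) by simp
  qed
qed

lemma SS_nonneg: "a > 0 \<Longrightarrow> b > 0 \<Longrightarrow> SS a b n \<ge> 0"
  using SS_mono[of a b 0 n] by simp

lemma SS_lt1: assumes "a > 0" "b > 0" "a + b < 1" shows "SS a b n \<le> 1/(1-(a+b))"
proof -
  have "SS a b n \<le> SS a b (2^n)" using assms by (intro SS_mono) (auto intro: less_imp_le less_exp)
  also have "\<dots> = (\<Sum>i<n. (a+b)^i)" by (rule SS_pow2)
  also have "\<dots> = (1 - (a+b)^n)/(1-(a+b))" using assms by (subst sum_gp_strict) auto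
  also have "\<dots> \<le> 1/(1-(a+b))" using assms by (intro divide_right_mono) auto
  finally show ?thesis .
qed

lemma SS_eq1: assumes "a > 0" "b > 0" "a + b = 1" "n \<ge> 1" shows "SS a b n \<le> log 2 (real n) + 1"
proof -
  obtain k where k: "2^k \<le> n" "n < 2^(k+1)" using ex_power_ivl1[of 2 n] assms by auto
  have "SS a b n \<le> SS a b (2^(k+1))" using assms k by (intro SS_mono) auto
  also have "\<dots> = real k + 1" using SS_pow2[of a b "k+1"] assms by simp
  also have "real k \<le> log 2 (real n)"
  proof -
    have "real k = log 2 (real (2^k))" by (simp add: log_nat_power)
    also have "\<dots> \<le> log 2 (real n)" using k by (subst log_le_cancel_iff) (auto simp flip: of_nat_le_iff)
    finally show ?thesis .
  qed
  finally show ?thesis by simp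
qed

theorem mainTheorem5:
  fixes \<alpha> \<beta> c0 :: real and g x :: "nat \<Rightarrow> real"
  assumes "\<alpha> > 0" and "\<beta> > 0"
    and g_const: "\<forall>n. g n = c0"
    and rec: "\<forall>n\<ge>2. x n = \<alpha> * x (nat \<lfloor>real n / 2\<rfloor>) + \<beta> * x (nat \<lceil>real n / 2\<rceil>) + g n"
  shows "\<exists>\<Phi> :: real \<Rightarrow> real. continuous_on UNIV \<Phi> \<and> (\<forall>t. \<Phi> (t + 1) = \<Phi> t) \<and>
    ((rec_d0 \<beta> g (x 1) = 0 \<and> rec_d1 \<beta> g (x 1) = 0) \<longrightarrow>
       (\<forall>\<^sub>F n in at_top. x n = real n powr log 2 (\<alpha> + \<beta>) * \<Phi> (frac (log 2 (real n))))) \<and>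
    ((rec_d0 \<beta> g (x 1) \<noteq> 0 \<or> rec_d1 \<beta> g (x 1) \<noteq> 0) \<and> \<alpha> + \<beta> > 1 \<longrightarrow>
       (\<forall>\<epsilon>>0. (\<lambda>n. x n - real n powr log 2 (\<alpha> + \<beta>) * \<Phi> (frac (log 2 (real n))))
          \<in> O(\<lambda>n. real n powr (log 2 (max (max \<alpha> \<beta>) 1) + (if max \<alpha> \<beta> = 1 then \<epsilon> else 0))
                 * ln (real n) ^ (if max \<alpha> \<beta> < 1 then 1 else 0)))) \<and>
    ((rec_d0 \<beta> g (x 1) \<noteq> 0 \<or> rec_d1 \<beta> g (x 1) \<noteq> 0) \<and> \<alpha> + \<beta> \<le> 1 \<longrightarrow>
       x \<in> O(\<lambda>n. ln (real n) ^ (if \<alpha> + \<beta> = 1 \<and> rec_d0 \<beta> g (x 1) + rec_d1 \<beta> g (x 1) \<noteq> 0 then 1 else 0)))"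
proof -
  have d0: "rec_d0 \<beta> g (x 1) = (1-\<beta>) * x 1" unfolding rec_d0_def using g_const by simp
  have d1: "rec_d1 \<beta> g (x 1) = c0 - (1-\<beta>) * x 1" unfolding rec_d1_def using g_const by simp
  have x2: "x 2 = (\<alpha>+\<beta>) * x 1 + c0" by (rule x2_eq[OF g_const rec])
  have sol: "\<And>n. n \<ge> 1 \<Longrightarrow> x n = x 1 + (x 2 - x 1) * SS \<alpha> \<beta> n" using rec_sol[OF g_const rec] by blast
  define D where "D = (\<alpha>+\<beta>-1) * x 1 + c0"
  have D: "x 2 - x 1 = D" unfolding D_def x2 by (simp add: algebra_simps)
  show ?thesis
  proof (cases "\<alpha> + \<beta> > 1")
    case True
    note ab = assms(1,2) True
    obtain \<Psi> where \<Psi>: "continuous_on UNIV \<Psi>" "\<forall>t. \<Psi> (t+1) = \<Psi> t"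
      "\<forall>n\<ge>1. TT \<alpha> \<beta> n = real n powr log 2 (\<alpha>+\<beta>) * \<Psi> (frac (log 2 (real n)))"
      using Psi_exists[OF ab] by blast
    have xe: "x n = D * (real n powr log 2 (\<alpha>+\<beta>) * \<Psi> (frac (log 2 (real n)))) - c0/(\<alpha>+\<beta>-1)" if n: "n \<ge> 1" for n
    proof -
      have "x n = x 1 + D * SS \<alpha> \<beta> n" using sol[OF n] D by simp
      also have "\<dots> = D * TT \<alpha> \<beta> n - c0/(\<alpha>+\<beta>-1)"
      proof -
        have L: "\<alpha>+\<beta>-1 \<noteq> 0" using True by simp
        have "D - c0 = (\<alpha>+\<beta>-1) * x 1" unfolding D_def by simp
        then have "D/(\<alpha>+\<beta>-1) - c0/(\<alpha>+\<beta>-1) = x 1" using L by (simp add: diff_divide_distrib[symmetric])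
        then show ?thesis unfolding TT_def[OF ab] by (simp add: algebra_simps)
      qed
      finally show ?thesis using \<Psi>(3) n by simp
    qed
    define \<Phi> where "\<Phi> = (\<lambda>t. D * \<Psi> t)"
    have c: "continuous_on UNIV \<Phi>" unfolding \<Phi>_def by (intro continuous_intros \<Psi>(1))
    have p: "\<forall>t. \<Phi> (t + 1) = \<Phi> t" unfolding \<Phi>_def using \<Psi>(2) by simp
    have xe2: "x n - real n powr log 2 (\<alpha> + \<beta>) * \<Phi> (frac (log 2 (real n))) = - c0/(\<alpha>+\<beta>-1)" if "n \<ge> 1" for n
      using xe[OF that] unfolding \<Phi>_def by (simp add: algebra_simps)
    have P1: "(\<forall>\<^sub>F n in at_top. x n = real n powr log 2 (\<alpha> + \<beta>) * \<Phi> (frac (log 2 (real n))))"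
      if "rec_d0 \<beta> g (x 1) = 0 \<and> rec_d1 \<beta> g (x 1) = 0"
    proof -
      have "c0 = 0" using that d0 d1 by simp
      then show ?thesis using xe2 unfolding eventually_at_top_linorder by (intro exI[of _ 1]) auto
    qed
    have P2: "(\<lambda>n. x n - real n powr log 2 (\<alpha> + \<beta>) * \<Phi> (frac (log 2 (real n))))
          \<in> O(\<lambda>n. real n powr (log 2 (max (max \<alpha> \<beta>) 1) + (if max \<alpha> \<beta> = 1 then \<epsilon> else 0))
                 * ln (real n) ^ (if max \<alpha> \<beta> < 1 then 1 else 0))" if e: "\<epsilon> > 0" for \<epsilon>
    proof (rule bounded_bigo)
      show "0 \<le> log 2 (max (max \<alpha> \<beta>) 1) + (if max \<alpha> \<beta> = 1 then \<epsilon> else 0)" using e by auto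
      show "\<forall>\<^sub>F n in at_top. \<bar>x n - real n powr log 2 (\<alpha> + \<beta>) * \<Phi> (frac (log 2 (real n)))\<bar> \<le> \<bar>c0/(\<alpha>+\<beta>-1)\<bar>"
        using xe2 unfolding eventually_at_top_linorder by (intro exI[of _ 1]) auto
    qed
    show ?thesis
      apply (rule exI[of _ \<Phi>])
      apply (intro conjI)
      subgoal by (rule c)
      subgoal by (rule p)
      subgoal using P1 by blast
      subgoal using P2 by blast
      subgoal using True by (meson not_le)
      done
  next
    case False
    then have le1: "\<alpha> + \<beta> \<le> 1" by simp
    define \<Phi> where "\<Phi> = (\<lambda>t::real. 0::real)"
    have P1: "(\<forall>\<^sub>F n in at_top. x n = real n powr log 2 (\<alpha> + \<beta>) * \<Phi> (frac (log 2 (real n))))"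
      if "rec_d0 \<beta> g (x 1) = 0 \<and> rec_d1 \<beta> g (x 1) = 0"
    proof -
      have c0: "c0 = 0" using that d0 d1 by simp
      have "\<beta> < 1" using assms le1 by simp
      then have "x 1 = 0" using that d0 by simp
      then have "D = 0" unfolding D_def using c0 by simp
      then have "x n = 0" if "n \<ge> 1" for n using sol[OF that] D \<open>x 1 = 0\<close> by simp
      then show ?thesis unfolding \<Phi>_def eventually_at_top_linorder by (intro exI[of _ 1]) auto
    qed
    have P3: "x \<in> O(\<lambda>n. ln (real n) ^ (if \<alpha> + \<beta> = 1 \<and> rec_d0 \<beta> g (x 1) + rec_d1 \<beta> g (x 1) \<noteq> 0 then 1 else 0))"
    proof (cases "\<alpha> + \<beta> = 1 \<and> rec_d0 \<beta> g (x 1) + rec_d1 \<beta> g (x 1) \<noteq> 0")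
      case True
      have eq1: "\<alpha> + \<beta> = 1" using True by simp
      define K where "K = \<bar>x 1\<bar> + \<bar>D\<bar> * (1/ln 2 + 1)"
      have "\<forall>\<^sub>F n in at_top. norm (x n) \<le> K * norm (ln (real n) ^ 1)"
        unfolding eventually_at_top_linorder
      proof (intro exI[of _ 3] allI impI)
        fix n :: nat assume n: "n \<ge> 3"
        have l1: "ln (real n) \<ge> 1" by (rule ln_ge1[OF n])
        have S0: "SS \<alpha> \<beta> n \<ge> 0" using SS_nonneg assms by simp
        have "SS \<alpha> \<beta> n \<le> log 2 (real n) + 1" using SS_eq1[OF assms(1,2) eq1] n by simp
        also have "\<dots> = ln (real n) / ln 2 + 1" by (simp add: log_def)
        also have "\<dots> \<le> ln (real n) / ln 2 + ln (real n)" using l1 by simp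
        also have "\<dots> = (1/ln 2 + 1) * ln (real n)" by (simp add: field_simps)
        finally have Sb: "SS \<alpha> \<beta> n \<le> (1/ln 2 + 1) * ln (real n)" .
        have "\<bar>x n\<bar> \<le> \<bar>x 1\<bar> + \<bar>D\<bar> * SS \<alpha> \<beta> n"
        proof -
          have "x n = x 1 + D * SS \<alpha> \<beta> n" using sol[of n] n D by simp
          then have "\<bar>x n\<bar> \<le> \<bar>x 1\<bar> + \<bar>D * SS \<alpha> \<beta> n\<bar>" by (simp only: abs_triangle_ineq)
          then show ?thesis using S0 by (simp add: abs_mult)
        qed
        also have "\<dots> \<le> \<bar>x 1\<bar> * ln (real n) + \<bar>D\<bar> * ((1/ln 2 + 1) * ln (real n))"
        proof -
          have "\<bar>x 1\<bar> * 1 \<le> \<bar>x 1\<bar> * ln (real n)" by (rule mult_left_mono[OF l1]) simp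
          moreover have "\<bar>D\<bar> * SS \<alpha> \<beta> n \<le> \<bar>D\<bar> * ((1/ln 2 + 1) * ln (real n))" by (rule mult_left_mono[OF Sb]) simp
          ultimately show ?thesis by simp
        qed
        also have "\<dots> = K * ln (real n)" unfolding K_def by (simp add: algebra_simps)
        finally show "norm (x n) \<le> K * norm (ln (real n) ^ 1)" using l1 by simp
      qed
      then have "x \<in> O(\<lambda>n. ln (real n) ^ 1)" by (rule bigoI)
      then show ?thesis by (simp only: if_P[OF True])
    next
      case Fc: False
      have "\<exists>C. \<forall>n\<ge>1. \<bar>x n\<bar> \<le> C"
      proof (cases "\<alpha> + \<beta> = 1")
        case True
        then have "c0 = 0" using Fc d0 d1 by simp
        then have D0: "D = 0" unfolding D_def using True by simp
        have "\<forall>n\<ge>1. \<bar>x n\<bar> \<le> \<bar>x 1\<bar>"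
        proof (intro allI impI)
          fix n :: nat assume "n \<ge> 1"
          then have "x n = x 1" using sol[of n] D D0 by simp
          then show "\<bar>x n\<bar> \<le> \<bar>x 1\<bar>" by simp
        qed
        then show ?thesis by blast
      next
        case False
        then have lt: "\<alpha> + \<beta> < 1" using le1 by simp
        have "\<bar>x n\<bar> \<le> \<bar>x 1\<bar> + \<bar>D\<bar> * (1/(1-(\<alpha>+\<beta>)))" if n: "n \<ge> 1" for n
        proof -
          have S0: "SS \<alpha> \<beta> n \<ge> 0" using SS_nonneg assms by simp
          have S1: "SS \<alpha> \<beta> n \<le> 1/(1-(\<alpha>+\<beta>))" using SS_lt1[OF assms(1,2) lt] .
          have "\<bar>x n\<bar> \<le> \<bar>x 1\<bar> + \<bar>D\<bar> * SS \<alpha> \<beta> n"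
          proof -
            have "x n = x 1 + D * SS \<alpha> \<beta> n" using sol[OF n] D by simp
            then have "\<bar>x n\<bar> \<le> \<bar>x 1\<bar> + \<bar>D * SS \<alpha> \<beta> n\<bar>" by (simp only: abs_triangle_ineq)
            then show ?thesis using S0 by (simp add: abs_mult)
          qed
          also have "\<dots> \<le> \<bar>x 1\<bar> + \<bar>D\<bar> * (1/(1-(\<alpha>+\<beta>)))" using S1 by (intro add_left_mono mult_left_mono) auto
          finally show ?thesis .
        qed
        then show ?thesis by blast
      qed
      then obtain C where C: "\<forall>n\<ge>1. \<bar>x n\<bar> \<le> C" by blast
      have "\<forall>\<^sub>F n in at_top. norm (x n) \<le> \<bar>C\<bar> * norm (ln (real n) ^ 0)"
        unfolding eventually_at_top_linorder
      proof (intro exI[of _ 1] allI impI)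
        fix n :: nat assume "n \<ge> 1"
        then have "\<bar>x n\<bar> \<le> C" using C by simp
        moreover have "C \<le> \<bar>C\<bar>" by simp
        ultimately show "norm (x n) \<le> \<bar>C\<bar> * norm (ln (real n) ^ 0)" by simp
      qed
      then have "x \<in> O(\<lambda>n. ln (real n) ^ 0)" by (rule bigoI)
      then show ?thesis by (simp only: if_not_P[OF Fc])
    qed
    show ?thesis
      apply (rule exI[of _ \<Phi>])
      apply (intro conjI)
      subgoal unfolding \<Phi>_def by (rule continuous_on_const)
      subgoal unfolding \<Phi>_def by simp
      subgoal using P1 by blast
      subgoal using False by blast
      subgoal using P3 by blast
      done
  qed
qed

end
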